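(* Let $\lambda_1,\lambda_2,\sigma_1,\sigma_2\in\mathbb{C}^*$ and $\eta_1,\eta_2\in\mathbb{C}$ with $\lambda_1\neq\lambda_2$. Suppose that $V$ is a nonzero $\mathcal{G}$-submodule of $\Omega(\lambda_1,\eta_1,\sigma_1,0)\otimes\Omega(\lambda_2,\eta_2,\sigma_2,0)$. Then $1\otimes 1\in V$.
   Context: The planar Galilean conformal algebra $\mathcal{G}$ is the complex Lie algebra with basis $\{L_m,H_m,I_m,J_m\mid m\in\mathbb{Z}\}$ and brackets $[L_m,L_n]=(n-m)L_{m+n}$, $[L_m,H_n]=nH_{m+n}$, $[L_m,I_n]=(n-m)I_{m+n}$, $[L_m,J_n]=(n-m)J_{m+n}$, $[H_m,I_n]=I_{m+n}$, $[H_m,J_n]=-J_{m+n}$, and $[H_m,H_n]=[I_m,I_n]=[J_m,J_n]=[I_m,J_n]=0$ for all $m,n\in\mathbb{Z}$. For $\lambda,\sigma\in\mathbb{C}^*$, $\eta\in\mathbb{C}$, the module $\Omega(\lambda,\eta,\sigma,0)$ is a polynomial algebra $\mathbb{C}[X,Y]$ with $L_m f(X,Y)=\lambda^m(Y-mX+m\eta)f(X,Y-m)$, $H_m f(X,Y)=\lambda^m X f(X,Y-m)$, $I_m f(X,Y)=\lambda^m\sigma f(X-1,Y-m)$, $J_m f(X,Y)=0$. The tensor product of $\mathcal{G}$-modules has action $x(v\otimes w)=xv\otimes w+v\otimes xw$. *)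

theory Defs
  imports Complex_Main
begin

text \<open>Basis elements L_m, H_m, I_m, J_m (m an integer) of the planar Galilean conformal algebra.\<close>
datatype gca_gen = L int | H int | I int | J int

text \<open>Polynomials in C[X,Y] are represented by their polynomial functions C x C -> C
  (faithful since C is infinite).  Action of a basis element on Omega(lam, eta, sig, 0).\<close>
definition omega_act ::
  "complex \<Rightarrow> complex \<Rightarrow> complex \<Rightarrow> gca_gen \<Rightarrow> (complex \<Rightarrow> complex \<Rightarrow> complex) \<Rightarrow> complex \<Rightarrow> complex \<Rightarrow> complex"
  where
  "omega_act lam eta sig g f = (\<lambda>x y. case g of
      L m \<Rightarrow> lam powi m * (y - of_int m * x + of_int m * eta) * f x (y - of_int m)
    | H m \<Rightarrow> lam powi m * x * f x (y - of_int m)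
    | I m \<Rightarrow> lam powi m * sig * f (x - 1) (y - of_int m)
    | J m \<Rightarrow> 0)"

text \<open>The tensor product C[X1,Y1] (x) C[X2,Y2] is identified with C[X1,Y1,X2,Y2], represented by
  polynomial functions in four variables; u (x) v corresponds to (x1,y1,x2,y2) |-> u(x1,y1) v(x2,y2).\<close>
definition poly4 :: "(complex \<Rightarrow> complex \<Rightarrow> complex \<Rightarrow> complex \<Rightarrow> complex) \<Rightarrow> bool" where
  "poly4 F \<longleftrightarrow> (\<exists>S c. finite (S :: (nat \<times> nat \<times> nat \<times> nat) set) \<and>
      F = (\<lambda>x1 y1 x2 y2. \<Sum>(a, b, d, e)\<in>S. c (a, b, d, e) * x1 ^ a * y1 ^ b * x2 ^ d * y2 ^ e))"

definition tensor_act ::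
  "complex \<Rightarrow> complex \<Rightarrow> complex \<Rightarrow> complex \<Rightarrow> complex \<Rightarrow> complex \<Rightarrow> gca_gen
    \<Rightarrow> (complex \<Rightarrow> complex \<Rightarrow> complex \<Rightarrow> complex \<Rightarrow> complex)
    \<Rightarrow> (complex \<Rightarrow> complex \<Rightarrow> complex \<Rightarrow> complex \<Rightarrow> complex)" where
  "tensor_act l1 e1 s1 l2 e2 s2 g F = (\<lambda>x1 y1 x2 y2.
      omega_act l1 e1 s1 g (\<lambda>x y. F x y x2 y2) x1 y1
    + omega_act l2 e2 s2 g (\<lambda>x y. F x1 y1 x y) x2 y2)"

text \<open>A G-submodule of Omega(l1,e1,s1,0) (x) Omega(l2,e2,s2,0): a complex subspace closed under the
  action of all basis elements (hence of all of G).\<close>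
definition is_tensor_submodule ::
  "complex \<Rightarrow> complex \<Rightarrow> complex \<Rightarrow> complex \<Rightarrow> complex \<Rightarrow> complex
    \<Rightarrow> (complex \<Rightarrow> complex \<Rightarrow> complex \<Rightarrow> complex \<Rightarrow> complex) set \<Rightarrow> bool" where
  "is_tensor_submodule l1 e1 s1 l2 e2 s2 V \<longleftrightarrow>
     V \<subseteq> {F. poly4 F} \<and>
     (\<lambda>_ _ _ _. 0) \<in> V \<and>
     (\<forall>F\<in>V. \<forall>G\<in>V. (\<lambda>x1 y1 x2 y2. F x1 y1 x2 y2 + G x1 y1 x2 y2) \<in> V) \<and>
     (\<forall>c. \<forall>F\<in>V. (\<lambda>x1 y1 x2 y2. c * F x1 y1 x2 y2) \<in> V) \<and>
     (\<forall>g. \<forall>F\<in>V. tensor_act l1 e1 s1 l2 e2 s2 g F \<in> V)"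

end

theory Submission
  imports Defs "HOL-Computational_Algebra.Computational_Algebra" "HOL-Computational_Algebra.Field_as_Ring"
begin

type_synonym f4 = "complex \<Rightarrow> complex \<Rightarrow> complex \<Rightarrow> complex \<Rightarrow> complex"

definition mv :: "complex \<Rightarrow> complex \<Rightarrow> complex \<Rightarrow> complex \<Rightarrow> f4 \<Rightarrow> f4" where
  "mv a1 b1 a2 b2 G = (\<lambda>x1 y1 x2 y2. G (x1-a1) (y1-b1) (x2-a2) (y2-b2))"
definition dif :: "complex \<Rightarrow> complex \<Rightarrow> complex \<Rightarrow> complex \<Rightarrow> f4 \<Rightarrow> f4" where
  "dif a1 b1 a2 b2 G = (\<lambda>x1 y1 x2 y2. G (x1-a1) (y1-b1) (x2-a2) (y2-b2) - G x1 y1 x2 y2)"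
definition act :: "complex \<Rightarrow> complex \<Rightarrow> complex \<Rightarrow> complex \<Rightarrow> complex \<Rightarrow> complex poly \<Rightarrow> f4 \<Rightarrow> f4" where
  "act c a1 b1 a2 b2 p G = (\<lambda>x1 y1 x2 y2. \<Sum>m<Suc (degree p). coeff p m * c^m *
     G (x1 - of_nat m * a1) (y1 - of_nat m * b1) (x2 - of_nat m * a2) (y2 - of_nat m * b2))"
definition polydir :: "complex \<Rightarrow> complex \<Rightarrow> complex \<Rightarrow> complex \<Rightarrow> nat \<Rightarrow> f4 \<Rightarrow> bool" where
  "polydir a1 b1 a2 b2 n G \<longleftrightarrow> (\<forall>x1 y1 x2 y2. \<exists>P. degree P \<le> n \<and>
     (\<forall>t. G (x1 + t*a1) (y1 + t*b1) (x2 + t*a2) (y2 + t*b2) = poly P t))"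
definition Q0 :: "f4 \<Rightarrow> bool" where
  "Q0 G \<longleftrightarrow> (\<exists>n. polydir 1 0 0 0 n G) \<and> (\<exists>n. polydir 0 1 0 0 n G) \<and>
     (\<exists>n. polydir 0 0 1 0 n G) \<and> (\<exists>n. polydir 0 0 0 1 n G)"
definition inv4 :: "complex \<Rightarrow> complex \<Rightarrow> complex \<Rightarrow> complex \<Rightarrow> f4 \<Rightarrow> bool" where
  "inv4 a1 b1 a2 b2 G \<longleftrightarrow> (\<forall>x1 y1 x2 y2. G (x1-a1) (y1-b1) (x2-a2) (y2-b2) = G x1 y1 x2 y2)"

lemma cop: fixes a b :: complex assumes "a \<noteq> b" shows "coprime [:-a,1:] [:-b,1:]"
proof (rule coprimeI)
  fix c assume "c dvd [:-a,1:]" "c dvd [:-b,1:]"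
  then have "c dvd [:-a,1:] - [:-b,1:]" by (rule dvd_diff)
  moreover have "[:-a,1:] - [:-b,1:] = [:b - a:]" by simp
  moreover have "is_unit [:b-a:]" using assms by (auto simp: is_unit_const_poly_iff dvd_field_iff)
  ultimately show "is_unit c" using dvd_unit_imp_unit by metis
qed

lemma bez: fixes a b :: complex assumes "a \<noteq> b" shows "\<exists>u v. u * [:-a,1:]^N + v * [:-b,1:]^N = 1"
proof -
  have "coprime ([:-a,1:]^N) ([:-b,1:]^N)" using cop[OF assms] by (simp add: coprime_power_left_iff coprime_power_right_iff)
  then have g: "gcd ([:-a,1:]^N) ([:-b,1:]^N) = 1" by (simp add: coprime_iff_gcd_eq_1)
  obtain u v where "bezout_coefficients ([:-a,1:]^N) ([:-b,1:]^N) = (u,v)" by (cases "bezout_coefficients ([:-a,1:]^N) ([:-b,1:]^N)") 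
  from bezout_coefficients[OF this] g show ?thesis by metis
qed

lemma act_trunc:
  assumes "degree p < K"
  shows "act c a1 b1 a2 b2 p G x1 y1 x2 y2 = (\<Sum>m<K. coeff p m * c^m *
     G (x1 - of_nat m * a1) (y1 - of_nat m * b1) (x2 - of_nat m * a2) (y2 - of_nat m * b2))"
  unfolding act_def
  by (rule sum.mono_neutral_left) (use assms in \<open>auto simp: coeff_eq_0\<close>)

lemma act_add: "act c a1 b1 a2 b2 (p + q) G = (\<lambda>x1 y1 x2 y2. act c a1 b1 a2 b2 p G x1 y1 x2 y2 + act c a1 b1 a2 b2 q G x1 y1 x2 y2)"
proof (intro ext)
  fix x1 y1 x2 y2
  let ?K = "Suc (max (degree p) (degree q))"
  have d: "degree (p+q) < ?K" using degree_add_le_max[of p q] by simp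
  show "act c a1 b1 a2 b2 (p + q) G x1 y1 x2 y2 = act c a1 b1 a2 b2 p G x1 y1 x2 y2 + act c a1 b1 a2 b2 q G x1 y1 x2 y2"
    by (simp only: act_trunc[OF d] act_trunc[of p ?K] act_trunc[of q ?K]) (auto simp: sum.distrib algebra_simps)
qed

lemma act_smult: "act c a1 b1 a2 b2 (smult k p) G = (\<lambda>x1 y1 x2 y2. k * act c a1 b1 a2 b2 p G x1 y1 x2 y2)"
proof (intro ext)
  fix x1 y1 x2 y2
  let ?K = "Suc (degree p)"
  have d: "degree (smult k p) < ?K" using degree_smult_le[of k p] by simp
  show "act c a1 b1 a2 b2 (smult k p) G x1 y1 x2 y2 = k * act c a1 b1 a2 b2 p G x1 y1 x2 y2"
    by (simp only: act_trunc[OF d] act_trunc[of p ?K]) (auto simp: sum_distrib_left algebra_simps)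
qed

lemma act_pCons: "act c a1 b1 a2 b2 (pCons a p) G = (\<lambda>x1 y1 x2 y2. a * G x1 y1 x2 y2 +
    c * act c a1 b1 a2 b2 p G (x1-a1) (y1-b1) (x2-a2) (y2-b2))"
proof (intro ext)
  fix x1 y1 x2 y2
  let ?K = "Suc (Suc (degree p))"
  have d: "degree (pCons a p) < ?K" using degree_pCons_le[of a p] by simp
  have e: "\<And>m (z::complex) w. z - of_nat (Suc m) * w = z - w - of_nat m * w" by (simp add: algebra_simps)
  show "act c a1 b1 a2 b2 (pCons a p) G x1 y1 x2 y2 = a * G x1 y1 x2 y2 +
    c * act c a1 b1 a2 b2 p G (x1-a1) (y1-b1) (x2-a2) (y2-b2)"
    apply (simp only: act_trunc[OF d])
    apply (subst sum.lessThan_Suc_shift)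
    apply (simp only: e coeff_pCons_Suc coeff_pCons_0)
    apply (simp only: act_def)
    apply (simp add: sum_distrib_left mult_ac del: sum.lessThan_Suc)
    done
qed

lemma act_0: "act c a1 b1 a2 b2 0 G = (\<lambda>_ _ _ _. 0)"
  by (simp add: act_def)

lemma act_1: "act c a1 b1 a2 b2 1 G = G"
  by (simp add: act_def)

lemma act_zero_fun: "act c a1 b1 a2 b2 p (\<lambda>_ _ _ _. 0) = (\<lambda>_ _ _ _. 0)"
  by (simp add: act_def)

lemma act_fadd: "act c a1 b1 a2 b2 p (\<lambda>x1 y1 x2 y2. F x1 y1 x2 y2 + G x1 y1 x2 y2) =
  (\<lambda>x1 y1 x2 y2. act c a1 b1 a2 b2 p F x1 y1 x2 y2 + act c a1 b1 a2 b2 p G x1 y1 x2 y2)"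
  by (simp add: act_def sum.distrib algebra_simps)

lemma act_fscale: "act c a1 b1 a2 b2 p (\<lambda>x1 y1 x2 y2. k * F x1 y1 x2 y2) =
  (\<lambda>x1 y1 x2 y2. k * act c a1 b1 a2 b2 p F x1 y1 x2 y2)"
  by (simp add: act_def sum_distrib_left algebra_simps)

lemma act_mult: "act c a1 b1 a2 b2 (p * q) G = act c a1 b1 a2 b2 p (act c a1 b1 a2 b2 q G)"
proof (induction p rule: pCons_induct)
  case 0
  then show ?case by (simp add: act_0)
next
  case (pCons a p)
  show ?case
    by (simp add: mult_pCons_left act_add act_smult act_pCons pCons.IH)
qed

lemma act_X: "act c a1 b1 a2 b2 [:0,1:] G = (\<lambda>x1 y1 x2 y2. c * G (x1-a1) (y1-b1) (x2-a2) (y2-b2))"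
  by (simp add: act_pCons act_0)

lemma act_lin: "act c a1 b1 a2 b2 [:-c,1:] G = (\<lambda>x1 y1 x2 y2. c * dif a1 b1 a2 b2 G x1 y1 x2 y2)"
  by (simp add: act_pCons act_0 dif_def algebra_simps)

lemma dif_scale: "dif a1 b1 a2 b2 (\<lambda>x1 y1 x2 y2. k * F x1 y1 x2 y2) = (\<lambda>x1 y1 x2 y2. k * dif a1 b1 a2 b2 F x1 y1 x2 y2)"
  by (simp add: dif_def algebra_simps)

lemma act_pow: "act c a1 b1 a2 b2 ([:-c,1:]^N) G = (\<lambda>x1 y1 x2 y2. c^N * (dif a1 b1 a2 b2 ^^ N) G x1 y1 x2 y2)"
proof (induction N)
  case 0
  then show ?case by (simp add: act_1)
next
  case (Suc N)
  show ?case
    by (simp only: power_Suc act_mult Suc.IH act_lin dif_scale) (simp add: algebra_simps)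
qed


lemma polydir_mono: "polydir a1 b1 a2 b2 n G \<Longrightarrow> n \<le> m \<Longrightarrow> polydir a1 b1 a2 b2 m G"
  unfolding polydir_def by (meson order_trans)

lemma polydir_mv: assumes "polydir a1 b1 a2 b2 n G" shows "polydir a1 b1 a2 b2 n (mv c1 d1 c2 d2 G)"
  unfolding polydir_def
proof (intro allI)
  fix x1 y1 x2 y2
  obtain P where P: "degree P \<le> n" "\<forall>t. G (x1 - c1 + t*a1) (y1 - d1 + t*b1) (x2 - c2 + t*a2) (y2 - d2 + t*b2) = poly P t"
    using assms unfolding polydir_def by blast
  show "\<exists>P. degree P \<le> n \<and> (\<forall>t. mv c1 d1 c2 d2 G (x1 + t * a1) (y1 + t * b1) (x2 + t * a2) (y2 + t * b2) = poly P t)"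
    using P by (intro exI[of _ P]) (simp add: mv_def algebra_simps)
qed

lemma polydir_lin: assumes "polydir a1 b1 a2 b2 n F" "polydir a1 b1 a2 b2 n G"
  shows "polydir a1 b1 a2 b2 n (\<lambda>x1 y1 x2 y2. h * F x1 y1 x2 y2 + k * G x1 y1 x2 y2)"
  unfolding polydir_def
proof (intro allI)
  fix x1 y1 x2 y2
  obtain P where P: "degree P \<le> n" "\<forall>t. F (x1 + t*a1) (y1 + t*b1) (x2 + t*a2) (y2 + t*b2) = poly P t"
    using assms(1) unfolding polydir_def by blast
  obtain Q where Q: "degree Q \<le> n" "\<forall>t. G (x1 + t*a1) (y1 + t*b1) (x2 + t*a2) (y2 + t*b2) = poly Q t"
    using assms(2) unfolding polydir_def by blast
  have "degree (smult h P + smult k Q) \<le> n"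
    by (meson P(1) Q(1) degree_add_le degree_smult_le order_trans)
  then show "\<exists>R. degree R \<le> n \<and> (\<forall>t. h * F (x1 + t * a1) (y1 + t * b1) (x2 + t * a2) (y2 + t * b2) +
      k * G (x1 + t * a1) (y1 + t * b1) (x2 + t * a2) (y2 + t * b2) = poly R t)"
    using P Q by (intro exI[of _ "smult h P + smult k Q"]) simp
qed

lemma polydir_dif: assumes "polydir a1 b1 a2 b2 n G" shows "polydir a1 b1 a2 b2 n (dif c1 d1 c2 d2 G)"
proof -
  have "polydir a1 b1 a2 b2 n (\<lambda>x1 y1 x2 y2. 1 * mv c1 d1 c2 d2 G x1 y1 x2 y2 + (-1) * G x1 y1 x2 y2)"
    by (rule polydir_lin[OF polydir_mv[OF assms] assms])
  moreover have "(\<lambda>x1 y1 x2 y2. 1 * mv c1 d1 c2 d2 G x1 y1 x2 y2 + (-1) * G x1 y1 x2 y2) = dif c1 d1 c2 d2 G"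
    by (simp add: mv_def dif_def)
  ultimately show ?thesis by simp
qed

lemma deg_diff_shift: fixes P :: "complex poly" assumes "degree P \<le> Suc n"
  shows "degree (P \<circ>\<^sub>p [:-1,1:] - P) \<le> n"
proof (rule degree_le, intro allI impI)
  fix i assume i: "n < i"
  have dc: "degree (P \<circ>\<^sub>p [:-1,1:]) = degree P" by (simp add: degree_pcompose)
  show "coeff (P \<circ>\<^sub>p [:-1,1:] - P) i = 0"
  proof (cases "i = degree P")
    case True
    have "lead_coeff (P \<circ>\<^sub>p [:-1,1:]) = lead_coeff P" by (simp add: lead_coeff_comp)
    then show ?thesis using True dc by simp
  next
    case False
    then have "i > degree P" using i assms by linarith
    then show ?thesis using dc by (simp add: coeff_eq_0)
  qed
qed

lemma polydir_dif_step: assumes "polydir a1 b1 a2 b2 (Suc n) G" shows "polydir a1 b1 a2 b2 n (dif a1 b1 a2 b2 G)"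
  unfolding polydir_def
proof (intro allI)
  fix x1 y1 x2 y2
  obtain P where P: "degree P \<le> Suc n" "\<forall>t. G (x1 + t*a1) (y1 + t*b1) (x2 + t*a2) (y2 + t*b2) = poly P t"
    using assms unfolding polydir_def by blast
  have "\<forall>t. dif a1 b1 a2 b2 G (x1 + t * a1) (y1 + t * b1) (x2 + t * a2) (y2 + t * b2) = poly (P \<circ>\<^sub>p [:-1,1:] - P) t"
  proof
    fix t
    have "G (x1 + t * a1 - a1) (y1 + t * b1 - b1) (x2 + t * a2 - a2) (y2 + t * b2 - b2) = poly P (t - 1)"
      using P(2)[rule_format, of "t-1"] by (simp add: algebra_simps)
    then show "dif a1 b1 a2 b2 G (x1 + t * a1) (y1 + t * b1) (x2 + t * a2) (y2 + t * b2) = poly (P \<circ>\<^sub>p [:-1,1:] - P) t"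
      using P(2) by (simp add: dif_def poly_pcompose)
  qed
  then show "\<exists>P. degree P \<le> n \<and> (\<forall>t. dif a1 b1 a2 b2 G (x1 + t * a1) (y1 + t * b1) (x2 + t * a2) (y2 + t * b2) = poly P t)"
    using deg_diff_shift[OF P(1)] by blast
qed

lemma polydir_dif_zero: assumes "polydir a1 b1 a2 b2 0 G" shows "dif a1 b1 a2 b2 G = (\<lambda>_ _ _ _. 0)"
proof (intro ext)
  fix x1 y1 x2 y2
  obtain P where P: "degree P \<le> 0" "\<forall>t. G (x1 + t*a1) (y1 + t*b1) (x2 + t*a2) (y2 + t*b2) = poly P t"
    using assms unfolding polydir_def by blast
  from P(1) have "degree P = 0" by simp
  then obtain k where k: "P = [:k:]" by (rule degree_eq_zeroE)
  then have c: "\<And>t. poly P t = k" by simp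
  have "G (x1 - a1) (y1 - b1) (x2 - a2) (y2 - b2) = poly P (-1)" using P(2)[rule_format, of "-1"] by simp
  moreover have "G x1 y1 x2 y2 = poly P 0" using P(2)[rule_format, of 0] by simp
  ultimately show "dif a1 b1 a2 b2 G x1 y1 x2 y2 = 0" by (simp add: dif_def c)
qed

lemma polydir_nil: "polydir a1 b1 a2 b2 n G \<Longrightarrow> (dif a1 b1 a2 b2 ^^ Suc n) G = (\<lambda>_ _ _ _. 0)"
proof (induction n arbitrary: G)
  case 0
  then show ?case by (simp add: polydir_dif_zero)
next
  case (Suc n)
  have "(dif a1 b1 a2 b2 ^^ Suc (Suc n)) G = (dif a1 b1 a2 b2 ^^ Suc n) (dif a1 b1 a2 b2 G)"
    by (simp only: funpow_Suc_right comp_def)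
  also have "\<dots> = (\<lambda>_ _ _ _. 0)" by (rule Suc.IH[OF polydir_dif_step[OF Suc.prems]])
  finally show ?case .
qed

lemma polydir_const: assumes "polydir a1 b1 a2 b2 n G" "inv4 a1 b1 a2 b2 G"
  shows "G (x1 + t*a1) (y1 + t*b1) (x2 + t*a2) (y2 + t*b2) = G x1 y1 x2 y2"
proof -
  obtain P where P: "degree P \<le> n" "\<forall>t. G (x1 + t*a1) (y1 + t*b1) (x2 + t*a2) (y2 + t*b2) = poly P t"
    using assms unfolding polydir_def by blast
  have im: "G (x1 - of_nat m*a1) (y1 - of_nat m*b1) (x2 - of_nat m*a2) (y2 - of_nat m*b2) = G x1 y1 x2 y2" for m
  proof (induction m)
    case 0 then show ?case by simp
  next
    case (Suc m)
    have "G (x1 - of_nat (Suc m)*a1) (y1 - of_nat (Suc m)*b1) (x2 - of_nat (Suc m)*a2) (y2 - of_nat (Suc m)*b2)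
      = G (x1 - of_nat m*a1 - a1) (y1 - of_nat m*b1 - b1) (x2 - of_nat m*a2 - a2) (y2 - of_nat m*b2 - b2)"
      by (simp add: algebra_simps)
    also have "\<dots> = G (x1 - of_nat m*a1) (y1 - of_nat m*b1) (x2 - of_nat m*a2) (y2 - of_nat m*b2)"
      using assms(2) unfolding inv4_def by blast
    finally show ?case using Suc.IH by simp
  qed
  define R where "R = P - [:poly P 0:]"
  have root: "poly R (- of_nat m) = 0" for m
  proof -
    have "poly P (- of_nat m) = G x1 y1 x2 y2" using P(2)[rule_format, of "- of_nat m"] im[of m] by simp
    moreover have "poly P 0 = G x1 y1 x2 y2" using P(2)[rule_format, of 0] by simp
    ultimately show ?thesis by (simp add: R_def)
  qed
  have "R = 0"
  proof (rule ccontr)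
    assume "R \<noteq> 0"
    then have "finite {x. poly R x = 0}" by (rule poly_roots_finite)
    moreover have "range (\<lambda>m::nat. - (of_nat m :: complex)) \<subseteq> {x. poly R x = 0}" using root by auto
    moreover have "infinite (range (\<lambda>m::nat. - (of_nat m :: complex)))"
      by (rule range_inj_infinite) (simp add: inj_def)
    ultimately show False using finite_subset by blast
  qed
  then have "poly R t = 0" by simp
  then have "poly P t = poly P 0" unfolding R_def by simp
  moreover have "poly P 0 = G x1 y1 x2 y2" using P(2)[rule_format, of 0] by simp
  ultimately show ?thesis using P(2) by simp
qed


lemma poly4_polydir: assumes "poly4 F" shows "\<exists>n. polydir a1 b1 a2 b2 n F"
proof -
  obtain S c where S: "finite (S :: (nat \<times> nat \<times> nat \<times> nat) set)"
    and F: "F = (\<lambda>x1 y1 x2 y2. \<Sum>(a, b, d, e)\<in>S. c (a, b, d, e) * x1 ^ a * y1 ^ b * x2 ^ d * y2 ^ e)"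
    using assms unfolding poly4_def by blast
  define n where "n = (\<Sum>s\<in>S. case s of (a, b, d, e) \<Rightarrow> a + b + d + e)"
  have "polydir a1 b1 a2 b2 n F"
    unfolding polydir_def
  proof (intro allI)
    fix x1 y1 x2 y2
    define P where "P = (\<Sum>s\<in>S. case s of (a, b, d, e) \<Rightarrow>
       smult (c (a, b, d, e)) ([:x1,a1:]^a * [:y1,b1:]^b * [:x2,a2:]^d * [:y2,b2:]^e))"
    have "degree P \<le> n"
      unfolding P_def
    proof (rule degree_sum_le[OF S])
      fix s assume s: "s \<in> S"
      obtain a b d e where se: "s = (a, b, d, e)" by (cases s) auto
      have "degree (smult (c (a, b, d, e)) ([:x1,a1:]^a * [:y1,b1:]^b * [:x2,a2:]^d * [:y2,b2:]^e)) \<le> a + b + d + e"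
      proof -
        have l: "degree ([:u,v:]^k) \<le> k" for u v :: complex and k
        proof -
          have "degree ([:u,v:]^k) \<le> degree [:u,v:] * k" by (rule degree_power_le)
          also have "\<dots> \<le> 1 * k" using degree_pCons_le[of u "[:v:]"] by (intro mult_right_mono) auto
          finally show ?thesis by simp
        qed
        have "degree ([:x1,a1:]^a * [:y1,b1:]^b * [:x2,a2:]^d * [:y2,b2:]^e) \<le> a + b + d + e"
          by (meson add_mono degree_mult_le l order_trans)
        then show ?thesis using degree_smult_le order_trans by blast
      qed
      moreover have "a + b + d + e \<le> n"
        unfolding n_def using member_le_sum[OF s, of "\<lambda>s. case s of (a, b, d, e) \<Rightarrow> a + b + d + e"] S se by simp
      ultimately show "degree (case s of (a, b, d, e) \<Rightarrow>
       smult (c (a, b, d, e)) ([:x1,a1:]^a * [:y1,b1:]^b * [:x2,a2:]^d * [:y2,b2:]^e)) \<le> n"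
        using se by simp
    qed
    moreover have "\<forall>t. F (x1 + t*a1) (y1 + t*b1) (x2 + t*a2) (y2 + t*b2) = poly P t"
      unfolding F P_def poly_sum
      by (auto intro!: sum.cong simp: poly_mult poly_power mult.assoc split: prod.splits)
    ultimately show "\<exists>P. degree P \<le> n \<and> (\<forall>t. F (x1 + t*a1) (y1 + t*b1) (x2 + t*a2) (y2 + t*b2) = poly P t)"
      by blast
  qed
  then show ?thesis by blast
qed

lemma poly4_Q0: "poly4 F \<Longrightarrow> Q0 F"
  unfolding Q0_def using poly4_polydir by blast

lemma Q0_dif: "Q0 G \<Longrightarrow> Q0 (dif c1 d1 c2 d2 G)"
  unfolding Q0_def using polydir_dif by blast

lemma Q0_nil: assumes "Q0 G" 
  shows "\<exists>N. (dif 1 0 0 0 ^^ N) G = (\<lambda>_ _ _ _. 0)" "\<exists>N. (dif 0 1 0 0 ^^ N) G = (\<lambda>_ _ _ _. 0)"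
        "\<exists>N. (dif 0 0 1 0 ^^ N) G = (\<lambda>_ _ _ _. 0)" "\<exists>N. (dif 0 0 0 1 ^^ N) G = (\<lambda>_ _ _ _. 0)"
  using assms unfolding Q0_def using polydir_nil by blast+

lemma inv4_dif: assumes "inv4 a1 b1 a2 b2 W" shows "inv4 a1 b1 a2 b2 (dif c1 d1 c2 d2 W)"
  unfolding inv4_def dif_def
proof (intro allI)
  fix x1 y1 x2 y2
  have "W (x1 - a1 - c1) (y1 - b1 - d1) (x2 - a2 - c2) (y2 - b2 - d2) = W (x1 - c1 - a1) (y1 - d1 - b1) (x2 - c2 - a2) (y2 - d2 - b2)"
    by (simp add: algebra_simps)
  also have "\<dots> = W (x1 - c1) (y1 - d1) (x2 - c2) (y2 - d2)" using assms unfolding inv4_def by blast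
  finally show "W (x1 - a1 - c1) (y1 - b1 - d1) (x2 - a2 - c2) (y2 - b2 - d2) - W (x1 - a1) (y1 - b1) (x2 - a2) (y2 - b2) =
     W (x1 - c1) (y1 - d1) (x2 - c2) (y2 - d2) - W x1 y1 x2 y2"
    using assms unfolding inv4_def by simp
qed

context
  fixes l1 e1 s1 l2 e2 s2 :: complex and V :: "f4 set"
  assumes sub: "is_tensor_submodule l1 e1 s1 l2 e2 s2 V"
begin

lemma V_zero: "(\<lambda>_ _ _ _. 0) \<in> V" using sub unfolding is_tensor_submodule_def by blast
lemma V_add: "F \<in> V \<Longrightarrow> G \<in> V \<Longrightarrow> (\<lambda>x1 y1 x2 y2. F x1 y1 x2 y2 + G x1 y1 x2 y2) \<in> V"
  using sub unfolding is_tensor_submodule_def by blast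
lemma V_scale: "F \<in> V \<Longrightarrow> (\<lambda>x1 y1 x2 y2. k * F x1 y1 x2 y2) \<in> V"
  using sub unfolding is_tensor_submodule_def by blast
lemma V_act: "F \<in> V \<Longrightarrow> tensor_act l1 e1 s1 l2 e2 s2 g F \<in> V"
  using sub unfolding is_tensor_submodule_def by blast
lemma V_poly4: "F \<in> V \<Longrightarrow> poly4 F"
  using sub unfolding is_tensor_submodule_def by blast

lemma V_sum: "finite A \<Longrightarrow> (\<And>i. i \<in> A \<Longrightarrow> f i \<in> V) \<Longrightarrow> (\<lambda>x1 y1 x2 y2. \<Sum>i\<in>A. k i * f i x1 y1 x2 y2) \<in> V"
proof (induction A rule: finite_induct)
  case empty
  then show ?case using V_zero by simp
next
  case (insert a A)
  have "(\<lambda>x1 y1 x2 y2. (\<lambda>x1 y1 x2 y2. k a * f a x1 y1 x2 y2) x1 y1 x2 y2 + (\<lambda>x1 y1 x2 y2. \<Sum>i\<in>A. k i * f i x1 y1 x2 y2) x1 y1 x2 y2) \<in> V"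
    by (rule V_add) (use insert V_scale in auto)
  then show ?case using insert by simp
qed

lemma V_I: "F \<in> V \<Longrightarrow> (\<lambda>x1 y1 x2 y2. l1^m * s1 * F (x1-1) (y1 - of_nat m) x2 y2 + l2^m * s2 * F x1 y1 (x2-1) (y2 - of_nat m)) \<in> V"
  using V_act[of F "I (int m)"] by (simp add: tensor_act_def omega_act_def power_int_of_nat)

lemma V_comb: assumes "G \<in> V"
  shows "(\<lambda>x1 y1 x2 y2. s1 * act l1 0 1 0 0 p G (x1-1) y1 x2 y2 + s2 * act l2 0 0 0 1 p G x1 y1 (x2-1) y2) \<in> V"
proof -
  have "(\<lambda>x1 y1 x2 y2. \<Sum>m<Suc (degree p). coeff p m * (\<lambda>x1 y1 x2 y2. l1^m * s1 * G (x1-1) (y1 - of_nat m) x2 y2 + l2^m * s2 * G x1 y1 (x2-1) (y2 - of_nat m)) x1 y1 x2 y2) \<in> V"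
    by (rule V_sum) (use V_I assms in auto)
  moreover have "(\<lambda>x1 y1 x2 y2. \<Sum>m<Suc (degree p). coeff p m * (\<lambda>x1 y1 x2 y2. l1^m * s1 * G (x1-1) (y1 - of_nat m) x2 y2 + l2^m * s2 * G x1 y1 (x2-1) (y2 - of_nat m)) x1 y1 x2 y2)
     = (\<lambda>x1 y1 x2 y2. s1 * act l1 0 1 0 0 p G (x1-1) y1 x2 y2 + s2 * act l2 0 0 0 1 p G x1 y1 (x2-1) y2)"
    by (simp add: act_def sum_distrib_left sum.distrib algebra_simps)
  ultimately show ?thesis by simp
qed

end


context
  fixes l1 e1 s1 l2 e2 s2 :: complex and V :: "f4 set"
  assumes sub: "is_tensor_submodule l1 e1 s1 l2 e2 s2 V"
begin

lemma V_extract: assumes "F \<in> V" "k \<noteq> 0" "\<And>x1 y1 x2 y2. F x1 y1 x2 y2 = k * G x1 y1 x2 y2" shows "G \<in> V"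
proof -
  have "(\<lambda>x1 y1 x2 y2. (1/k) * F x1 y1 x2 y2) \<in> V" using V_scale[OF sub assms(1)] .
  moreover have "(\<lambda>x1 y1 x2 y2. (1/k) * F x1 y1 x2 y2) = G" using assms(2,3) by (simp add: field_simps)
  ultimately show ?thesis by simp
qed

lemma claimA:
  assumes nz: "l1 \<noteq> 0" "l2 \<noteq> 0" "s1 \<noteq> 0" "s2 \<noteq> 0" "l1 \<noteq> l2"
    and G: "G \<in> V" "Q0 G"
  shows "(\<lambda>x1 y1 x2 y2. G (x1-1) y1 x2 y2) \<in> V"
    "(\<lambda>x1 y1 x2 y2. G (x1-1) (y1-1) x2 y2) \<in> V"
    "(\<lambda>x1 y1 x2 y2. G x1 y1 (x2-1) y2) \<in> V"
    "(\<lambda>x1 y1 x2 y2. G x1 y1 (x2-1) (y2-1)) \<in> V"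
proof -
  obtain n1 n2 where n: "polydir 0 1 0 0 n1 G" "polydir 0 0 0 1 n2 G" using G(2) unfolding Q0_def by blast
  define N where "N = Suc (max n1 n2)"
  have nil1: "act l1 0 1 0 0 ([:-l1,1:]^N) G = (\<lambda>_ _ _ _. 0)"
    unfolding act_pow N_def using polydir_nil[OF polydir_mono[OF n(1), of "max n1 n2"]] by simp
  have nil2: "act l2 0 0 0 1 ([:-l2,1:]^N) G = (\<lambda>_ _ _ _. 0)"
    unfolding act_pow N_def using polydir_nil[OF polydir_mono[OF n(2), of "max n1 n2"]] by simp
  obtain u v where uv: "u * [:-l1,1:]^N + v * [:-l2,1:]^N = 1" using bez[OF nz(5)] by blast
  define p1 where "p1 = v * [:-l2,1:]^N"
  define p2 where "p2 = u * [:-l1,1:]^N"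
  have e21: "act l1 0 1 0 0 p2 G = (\<lambda>_ _ _ _. 0)" unfolding p2_def act_mult nil1 act_zero_fun ..
  have e12: "act l2 0 0 0 1 p1 G = (\<lambda>_ _ _ _. 0)" unfolding p1_def act_mult nil2 act_zero_fun ..
  have e11: "act l1 0 1 0 0 p1 G = G"
  proof -
    have "G = act l1 0 1 0 0 (p2 + p1) G" using uv by (simp add: p1_def p2_def act_1)
    also have "\<dots> = act l1 0 1 0 0 p1 G" by (simp add: act_add e21)
    finally show ?thesis by simp
  qed
  have e22: "act l2 0 0 0 1 p2 G = G"
  proof -
    have "G = act l2 0 0 0 1 (p2 + p1) G" using uv by (simp add: p1_def p2_def act_1)
    also have "\<dots> = act l2 0 0 0 1 p2 G" by (simp add: act_add e12)
    finally show ?thesis by simp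
  qed
  show "(\<lambda>x1 y1 x2 y2. G (x1-1) y1 x2 y2) \<in> V"
    using V_comb[OF sub G(1), of p1] by (rule V_extract[where k=s1]) (use nz in \<open>simp_all add: e11 e12\<close>)
  show "(\<lambda>x1 y1 x2 y2. G x1 y1 (x2-1) y2) \<in> V"
    using V_comb[OF sub G(1), of p2] by (rule V_extract[where k=s2]) (use nz in \<open>simp_all add: e21 e22\<close>)
  show "(\<lambda>x1 y1 x2 y2. G (x1-1) (y1-1) x2 y2) \<in> V"
    using V_comb[OF sub G(1), of "[:0,1:] * p1"] by (rule V_extract[where k="s1*l1"])
      (use nz in \<open>(simp_all only: act_mult e11 e12 act_X act_zero_fun), simp_all\<close>)
  show "(\<lambda>x1 y1 x2 y2. G x1 y1 (x2-1) (y2-1)) \<in> V"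
    using V_comb[OF sub G(1), of "[:0,1:] * p2"] by (rule V_extract[where k="s2*l2"])
      (use nz in \<open>(simp_all only: act_mult e21 e22 act_X act_zero_fun), simp_all\<close>)
qed

lemma step:
  fixes Q :: "f4 \<Rightarrow> bool"
  assumes op: "\<And>W. W \<in> V \<Longrightarrow> Q W \<Longrightarrow> mv a1 b1 a2 b2 W \<in> V"
    and qc: "\<And>W. Q W \<Longrightarrow> Q (dif a1 b1 a2 b2 W)"
    and nil: "\<And>W. Q W \<Longrightarrow> \<exists>N. (dif a1 b1 a2 b2 ^^ N) W = (\<lambda>_ _ _ _. 0)"
    and G: "G \<in> V" "Q G" "G \<noteq> (\<lambda>_ _ _ _. 0)"
  shows "\<exists>G'. G' \<in> V \<and> Q G' \<and> G' \<noteq> (\<lambda>_ _ _ _. 0) \<and> inv4 a1 b1 a2 b2 G'"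
proof -
  let ?D = "dif a1 b1 a2 b2"
  have all: "(?D^^k) G \<in> V \<and> Q ((?D^^k) G)" for k
  proof (induction k)
    case 0 then show ?case using G by simp
  next
    case (Suc k)
    let ?W = "(?D^^k) G"
    have "(\<lambda>x1 y1 x2 y2. mv a1 b1 a2 b2 ?W x1 y1 x2 y2 + (-1) * ?W x1 y1 x2 y2) \<in> V"
    proof -
      have a: "mv a1 b1 a2 b2 ?W \<in> V" using op Suc.IH by blast
      have b: "(\<lambda>x1 y1 x2 y2. (-1) * ?W x1 y1 x2 y2) \<in> V" using V_scale[OF sub, of ?W "-1"] Suc.IH by blast
      show ?thesis by (rule V_add[OF sub a b])
    qed
    moreover have "(\<lambda>x1 y1 x2 y2. mv a1 b1 a2 b2 ?W x1 y1 x2 y2 + (-1) * ?W x1 y1 x2 y2) = ?D ?W"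
      by (simp add: mv_def dif_def)
    ultimately show ?case using Suc.IH qc by simp
  qed
  obtain N where N: "(?D^^N) G = (\<lambda>_ _ _ _. 0)" using nil G(2) by blast
  define M where "M = (LEAST N. (?D^^N) G = (\<lambda>_ _ _ _. 0))"
  have M: "(?D^^M) G = (\<lambda>_ _ _ _. 0)" unfolding M_def by (rule LeastI[of _ N]) (rule N)
  have M0: "M \<noteq> 0" using M G(3) by (auto)
  then obtain k where k: "M = Suc k" by (cases M) auto
  have nz: "(?D^^k) G \<noteq> (\<lambda>_ _ _ _. 0)"
    using not_less_Least[of k "\<lambda>N. (?D^^N) G = (\<lambda>_ _ _ _. 0)"] k unfolding M_def by auto
  have "?D ((?D^^k) G) = (\<lambda>_ _ _ _. 0)" using M k by simp
  then have "inv4 a1 b1 a2 b2 ((?D^^k) G)"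
    unfolding inv4_def dif_def by (metis (mono_tags, lifting) eq_iff_diff_eq_0)
  then show ?thesis using all[of k] nz by blast
qed

end


theorem proposition4p2:
  fixes l1 l2 s1 s2 e1 e2 :: complex
    and V :: "(complex \<Rightarrow> complex \<Rightarrow> complex \<Rightarrow> complex \<Rightarrow> complex) set"
  assumes "l1 \<noteq> 0" and "l2 \<noteq> 0" and "s1 \<noteq> 0" and "s2 \<noteq> 0"
    and "l1 \<noteq> l2"
    and "is_tensor_submodule l1 e1 s1 l2 e2 s2 V"
    and "V \<noteq> {\<lambda>_ _ _ _. 0}"
  shows "(\<lambda>_ _ _ _. 1) \<in> V"
proof -
  note sub = assms(6)
  note A = claimA[OF sub assms(1-5)]
  obtain F where F: "F \<in> V" "F \<noteq> (\<lambda>_ _ _ _. 0)" using assms(7) V_zero[OF sub] by blast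
  have QF: "Q0 F" using poly4_Q0 V_poly4[OF sub F(1)] by blast
  obtain G1 where G1: "G1 \<in> V" "Q0 G1" "G1 \<noteq> (\<lambda>_ _ _ _. 0)" "inv4 1 0 0 0 G1"
  proof -
    have "\<exists>G'. G' \<in> V \<and> Q0 G' \<and> G' \<noteq> (\<lambda>_ _ _ _. 0) \<and> inv4 1 0 0 0 G'"
    proof (rule step[OF sub])
      fix W assume "W \<in> V" "Q0 W"
      then show "mv 1 0 0 0 W \<in> V" using A(1) by (simp add: mv_def)
    qed (use Q0_dif Q0_nil F QF in auto)
    then show ?thesis using that by blast
  qed
  obtain G2 where G2: "G2 \<in> V" "Q0 G2 \<and> inv4 1 0 0 0 G2" "G2 \<noteq> (\<lambda>_ _ _ _. 0)" "inv4 0 0 1 0 G2"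
  proof -
    have "\<exists>G'. G' \<in> V \<and> (Q0 G' \<and> inv4 1 0 0 0 G') \<and> G' \<noteq> (\<lambda>_ _ _ _. 0) \<and> inv4 0 0 1 0 G'"
    proof (rule step[OF sub])
      fix W assume "W \<in> V" "Q0 W \<and> inv4 1 0 0 0 W"
      then show "mv 0 0 1 0 W \<in> V" using A(3) by (simp add: mv_def)
    qed (use Q0_dif Q0_nil inv4_dif G1 in auto)
    then show ?thesis using that by blast
  qed
  obtain G3 where G3: "G3 \<in> V" "(Q0 G3 \<and> inv4 1 0 0 0 G3) \<and> inv4 0 0 1 0 G3" "G3 \<noteq> (\<lambda>_ _ _ _. 0)" "inv4 0 1 0 0 G3"
  proof -
    have "\<exists>G'. G' \<in> V \<and> ((Q0 G' \<and> inv4 1 0 0 0 G') \<and> inv4 0 0 1 0 G') \<and> G' \<noteq> (\<lambda>_ _ _ _. 0) \<and> inv4 0 1 0 0 G'"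
    proof (rule step[OF sub])
      fix W assume W: "W \<in> V" "(Q0 W \<and> inv4 1 0 0 0 W) \<and> inv4 0 0 1 0 W"
      have "(\<lambda>x1 y1 x2 y2. W (x1-1) (y1-1) x2 y2) \<in> V" using A(2) W by blast
      moreover have "(\<lambda>x1 y1 x2 y2. W (x1-1) (y1-1) x2 y2) = mv 0 1 0 0 W"
      proof (intro ext)
        fix x1 y1 x2 y2
        show "W (x1-1) (y1-1) x2 y2 = mv 0 1 0 0 W x1 y1 x2 y2"
          using W(2) unfolding inv4_def mv_def by (metis diff_zero)
      qed
      ultimately show "mv 0 1 0 0 W \<in> V" by simp
    qed (use Q0_dif Q0_nil inv4_dif G2 in auto)
    then show ?thesis using that by blast
  qed
  obtain G4 where G4: "G4 \<in> V" "((Q0 G4 \<and> inv4 1 0 0 0 G4) \<and> inv4 0 0 1 0 G4) \<and> inv4 0 1 0 0 G4" "G4 \<noteq> (\<lambda>_ _ _ _. 0)" "inv4 0 0 0 1 G4"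
  proof -
    have "\<exists>G'. G' \<in> V \<and> (((Q0 G' \<and> inv4 1 0 0 0 G') \<and> inv4 0 0 1 0 G') \<and> inv4 0 1 0 0 G') \<and> G' \<noteq> (\<lambda>_ _ _ _. 0) \<and> inv4 0 0 0 1 G'"
    proof (rule step[OF sub])
      fix W assume W: "W \<in> V" "((Q0 W \<and> inv4 1 0 0 0 W) \<and> inv4 0 0 1 0 W) \<and> inv4 0 1 0 0 W"
      have "(\<lambda>x1 y1 x2 y2. W x1 y1 (x2-1) (y2-1)) \<in> V" using A(4) W by blast
      moreover have "(\<lambda>x1 y1 x2 y2. W x1 y1 (x2-1) (y2-1)) = mv 0 0 0 1 W"
      proof (intro ext)
        fix x1 y1 x2 y2
        show "W x1 y1 (x2-1) (y2-1) = mv 0 0 0 1 W x1 y1 x2 y2"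
          using W(2) unfolding inv4_def mv_def by (metis diff_zero)
      qed
      ultimately show "mv 0 0 0 1 W \<in> V" by simp
    qed (use Q0_dif Q0_nil inv4_dif G3 in auto)
    then show ?thesis using that by blast
  qed
  obtain n1 n2 n3 n4 where nn: "polydir 1 0 0 0 n1 G4" "polydir 0 1 0 0 n2 G4" "polydir 0 0 1 0 n3 G4" "polydir 0 0 0 1 n4 G4"
    using G4(2) unfolding Q0_def by blast
  have const: "G4 x1 y1 x2 y2 = G4 0 0 0 0" for x1 y1 x2 y2
  proof -
    have "G4 x1 y1 x2 y2 = G4 0 y1 x2 y2"
      using polydir_const[OF nn(1), where t=x1 and ?x1.0=0 and ?y1.0=y1 and ?x2.0=x2 and ?y2.0=y2] G4 by simp
    also have "\<dots> = G4 0 0 x2 y2"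
      using polydir_const[OF nn(2), where t=y1 and ?x1.0=0 and ?y1.0=0 and ?x2.0=x2 and ?y2.0=y2] G4 by simp
    also have "\<dots> = G4 0 0 0 y2"
      using polydir_const[OF nn(3), where t=x2 and ?x1.0=0 and ?y1.0=0 and ?x2.0=0 and ?y2.0=y2] G4 by simp
    also have "\<dots> = G4 0 0 0 0"
      using polydir_const[OF nn(4), where t=y2 and ?x1.0=0 and ?y1.0=0 and ?x2.0=0 and ?y2.0=0] G4 by simp
    finally show ?thesis .
  qed
  define c where "c = G4 0 0 0 0"
  have Gc: "G4 = (\<lambda>_ _ _ _. c)" using const unfolding c_def by (intro ext) simp
  have c0: "c \<noteq> 0" using G4(3) Gc by auto
  show ?thesis
    by (rule V_extract[OF sub G4(1) c0]) (simp add: Gc)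
qed

end
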